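(* Consider the model, data and initialization described in the context. Suppose $\delta>0$ and $m\ge 50\log\big(\frac{2(N+NK)}{\delta}\big)$. For all $j\in[N]$ and $k\in\mathcal{B}_j$, with probability at least $1-\delta$, $$|\mathcal{S}^{(0)}_{\mathrm{s},k,j}|\ge 0.4m\quad\text{and}\quad|\mathcal{S}^{(0)}_{\mathrm{r},j,k}|\ge0.4m,$$ where $\mathcal{S}^{(0)}_{\mathrm{s},k,j}=\{i\in[m]:\langle\mathbf{w}^{(0)}_{\mathcal{I}(\mathbf{r}_k),i},\mathbf{s}_j\rangle>0\}$ and $\mathcal{S}^{(0)}_{\mathrm{r},j,k}=\{i\in[m]:\langle\mathbf{w}^{(0)}_{\mathcal{I}(\mathbf{a}_j),i},\mathbf{x}_a(\mathbf{Z}^{(0)},[\mathbf{o}\ \mathbf{s}_j\ \mathbf{r}_k])\rangle>0\}$.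
   Context: Fix $d$ and $m$. Tokens are nonzero, mutually orthogonal vectors in $\mathbb{R}^d$ with indices $\mathcal{I}(\cdot)\in[d]$: a context token $\mathbf{o}$, subjects $\mathbf{s}_1,\dots,\mathbf{s}_N$, answers $\mathbf{a}_1,\dots,\mathbf{a}_N$, relation phrases $\mathbf{r}_k$ for $k$ in a finite set $\mathcal{R}$. $K$ is a positive integer and for each $j\in[N]$, $\mathcal{B}_j\subseteq\mathcal{R}$ is a set of at most $K$ relation indices associated with subject $j$. Parameters $\mathbf{Z}^{(0)}\in\mathbb{R}^{d\times d}$ and $\mathbf{W}^{(0)}\in\mathbb{R}^{dm\times d}$ (rows $\mathbf{w}^{(0)}_{i,k}$, $i\in[d]$, $k\in[m]$) have i.i.d. $\mathcal{N}(0,\sigma_0^2)$ entries, independent of each other. For $\mathbf{X}\in\mathbb{R}^{d\times L}$ with last column $\mathbf{X}[-1]$, $\mathbf{x}_a(\mathbf{Z},\mathbf{X})=\mathbf{X}\,\mathrm{softmax}(\mathbf{X}^\top\mathbf{Z}\mathbf{X}[-1]/\sqrt d)+\mathbf{X}[-1]$, and $[\mathbf{o}\ \mathbf{s}_j\ \mathbf{r}_k]$ denotes column concatenation. *)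

theory Defs
  imports "HOL-Probability.Probability"
begin

text \<open>Labels of the tokens: context token o, subjects s_j, answers a_j, relations r_k.\<close>
datatype 'r tok = TO | TS nat | TA nat | TR 'r

definition tokens :: "nat \<Rightarrow> 'r set \<Rightarrow> 'r tok set" where
  "tokens N R = insert TO (TS ` {1..N} \<union> TA ` {1..N} \<union> TR ` R)"

text \<open>Random initialization entries: W^(0) has rows w_{i,k} (i in the d-type, k < m),
  each a vector in R^d with entries indexed by l; Z^(0) has entries (p,q).\<close>
datatype 'd pkey = WKey 'd nat 'd | ZKey 'd 'd

definition gauss :: "real \<Rightarrow> real measure" where
  "gauss \<sigma> = density lborel (normal_density 0 \<sigma>)"

definition init_keys :: "nat \<Rightarrow> 'd pkey set" where
  "init_keys m = {WKey i k l | i k l. k < m} \<union> {ZKey p q | p q. True}"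

definition init_space :: "real \<Rightarrow> nat \<Rightarrow> ('d pkey \<Rightarrow> real) measure" where
  "init_space \<sigma>0 m = PiM (init_keys m) (\<lambda>_. gauss \<sigma>0)"

definition wrow :: "('d::finite pkey \<Rightarrow> real) \<Rightarrow> 'd \<Rightarrow> nat \<Rightarrow> real^'d" where
  "wrow \<omega> i k = (\<chi> l. \<omega> (WKey i k l))"

definition Zmat :: "('d::finite pkey \<Rightarrow> real) \<Rightarrow> real^'d^'d" where
  "Zmat \<omega> = (\<chi> p q. \<omega> (ZKey p q))"

definition softmax :: "real list \<Rightarrow> real list" where
  "softmax v = map (\<lambda>x. exp x / sum_list (map exp v)) v"

text \<open>x_a(Z,X) = X softmax(X^T Z X[-1] / sqrt d) + X[-1], with X given as its list of columns.\<close>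
definition attn_out :: "real^'d^'d \<Rightarrow> (real^'d::finite) list \<Rightarrow> real^'d" where
  "attn_out Z X =
     (let q = last X;
          p = softmax (map (\<lambda>x. (x \<bullet> (Z *v q)) / sqrt (real CARD('d))) X)
      in sum_list (map2 (\<lambda>c x. c *\<^sub>R x) p X) + q)"

end

theory Submission
  imports Defs
begin

lemma gauss_prob: "s > 0 \<Longrightarrow> prob_space (gauss s)"
  unfolding gauss_def by (rule prob_space_normal_density)

lemma sets_gauss[simp, measurable_cong]: "sets (gauss s) = sets borel"
  unfolding gauss_def by simp

lemma normal_half:
  assumes s: "s > 0"
  shows "measure (density lborel (normal_density 0 s)) {0<..} = 1/2"
proof -
  define D where "D = density lborel (\<lambda>x. ennreal (normal_density 0 s x))"
  interpret D: prob_space D unfolding D_def using s by (rule prob_space_normal_density)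
  have sym: "distr D borel uminus = D"
  proof -
    have "density (distr lborel borel uminus) (\<lambda>x. ennreal (normal_density 0 s x))
       = distr (density lborel (\<lambda>x. ennreal (normal_density 0 s (- x)))) borel uminus"
      by (rule density_distr) auto
    moreover have "(\<lambda>x. ennreal (normal_density 0 s (- x))) = (\<lambda>x. ennreal (normal_density 0 s x))"
      by (auto simp: normal_density_def)
    ultimately show ?thesis unfolding D_def lborel_distr_uminus by metis
  qed
  have "measure D {..<0} = measure (distr D borel uminus) {..<0}" using sym by simp
  also have "\<dots> = measure D (uminus -` {..<0} \<inter> space D)"
    by (rule measure_distr[where f="uminus::real\<Rightarrow>real"]) (auto simp: D_def)
  also have "uminus -` {..<0::real} \<inter> space D = {0<..}" by (auto simp: D_def)
  finally have eq: "measure D {..<0} = measure D {0<..}" .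
  have z: "measure D {0} = 0"
  proof -
    have "emeasure D {0} = (\<integral>\<^sup>+ x. ennreal (normal_density 0 s x) * indicator {0} x \<partial>lborel)"
      unfolding D_def by (rule emeasure_density) auto
    also have "\<dots> = 0" by (rule nn_integral_null_set) auto
    finally show ?thesis by (simp add: measure_def)
  qed
  have "UNIV = {..<0::real} \<union> {0} \<union> {0<..}" by auto
  then have "1 = measure D ({..<0::real} \<union> {0} \<union> {0<..})"
    using D.prob_space by (simp add: D_def)
  also have "\<dots> = measure D {..<0::real} + measure D {0} + measure D {0<..}"
  proof -
    have "measure D ({..<0::real} \<union> {0} \<union> {0<..}) = measure D ({..<0::real} \<union> {0}) + measure D {0<..}"
      by (rule D.finite_measure_Union) (auto simp: D_def)
    moreover have "measure D ({..<0::real} \<union> {0}) = measure D {..<0::real} + measure D {0}"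
      by (rule D.finite_measure_Union) (auto simp: D_def)
    ultimately show ?thesis by simp
  qed
  finally show ?thesis using eq z unfolding D_def by simp
qed

definition KW :: "nat \<Rightarrow> 'd pkey set" where "KW m = {WKey i k l | i k l. k < m}"
definition KZ :: "'d pkey set" where "KZ = {ZKey p q | p q. True}"

lemma finite_KW: "finite (KW m :: 'd::finite pkey set)"
proof -
  have "KW m = (\<lambda>(i,k,l). WKey i k l) ` (UNIV \<times> {..<m} \<times> (UNIV :: 'd set))"
    by (auto simp: KW_def image_iff)
  then show ?thesis by simp
qed

lemma finite_KZ: "finite (KZ :: 'd::finite pkey set)"
proof -
  have "KZ = (\<lambda>(p,q). ZKey p q) ` (UNIV \<times> (UNIV :: 'd set))"
    by (auto simp: KZ_def image_iff)
  then show ?thesis using finite_imageI[of "UNIV :: ('d \<times> 'd) set" "\<lambda>(p,q). ZKey p q"]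
    by simp
qed

lemma init_keys_eq: "init_keys m = KZ \<union> KW m"
  unfolding init_keys_def KZ_def KW_def by blast

lemma coord_meas:
  "k \<in> I \<Longrightarrow> (\<lambda>y. y k) \<in> borel_measurable (PiM I (\<lambda>_. gauss s))"
  using measurable_component_singleton[of k I "\<lambda>_. gauss s"]
  by (simp cong: measurable_cong_sets)

lemma coord_indep:
  assumes s: "s > 0" and I: "I \<noteq> {}"
  shows "prob_space.indep_vars (PiM I (\<lambda>_. gauss s)) (\<lambda>_. gauss s) (\<lambda>k \<omega>. \<omega> k) I"
proof -
  interpret product_prob_space "\<lambda>_. gauss s" I
    using gauss_prob[OF s]
    by (simp add: product_prob_space_def product_prob_space_axioms_def product_sigma_finite_def prob_space_imp_sigma_finite)
  have rv: "random_variable (gauss s) (\<lambda>\<omega>. \<omega> k)" for k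
  proof (cases "k \<in> I")
    case True then show ?thesis by (rule measurable_component_singleton)
  next
    case False
    then have "\<And>\<omega>. \<omega> \<in> space (PiM I (\<lambda>_. gauss s)) \<Longrightarrow> \<omega> k = undefined"
      by (auto simp: space_PiM PiE_def extensional_def)
    then show ?thesis by (subst measurable_cong[where g="\<lambda>_. undefined"]) (auto simp: gauss_def)
  qed
  have "distr (PiM I (\<lambda>_. gauss s)) (PiM I (\<lambda>_. gauss s)) (\<lambda>x. \<lambda>i\<in>I. x i)
     = distr (PiM I (\<lambda>_. gauss s)) (PiM I (\<lambda>_. gauss s)) (\<lambda>x. x)"
    by (rule distr_cong) (simp_all add: space_PiM PiE_restrict)
  also have "\<dots> = PiM I (\<lambda>_. gauss s)" by simp
  also have "\<dots> = PiM I (\<lambda>i. distr (PiM I (\<lambda>_. gauss s)) (gauss s) (\<lambda>x. x i))"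
    using distr_PiM_component[of I "\<lambda>_. gauss s"] gauss_prob[OF s]
    by (intro PiM_cong) simp_all
  finally show ?thesis
    using indep_vars_iff_distr_eq_PiM[OF I, where M'="\<lambda>_. gauss s" and X="\<lambda>k \<omega>. \<omega> k"] rv by simp
qed

lemma gauss_PiM_prob: "s > 0 \<Longrightarrow> prob_space (PiM I (\<lambda>_. gauss s))"
  by (rule prob_space_PiM) (rule gauss_prob)

lemma indep_restrict_gauss:
  assumes s: "s > 0" and I: "I \<noteq> {}" and K: "\<And>j. j \<in> L \<Longrightarrow> K j \<subseteq> I"
    and dj: "disjoint_family_on K L"
    and f: "\<And>j. j \<in> L \<Longrightarrow> f j \<in> borel_measurable (PiM (K j) (\<lambda>_. gauss s))"
  shows "prob_space.indep_vars (PiM I (\<lambda>_. gauss s)) (\<lambda>_. borel) (\<lambda>j \<omega>. f j (restrict \<omega> (K j))) L"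
proof -
  interpret P: prob_space "PiM I (\<lambda>_. gauss s)" using s by (rule gauss_PiM_prob)
  have "P.indep_vars (\<lambda>j. PiM (K j) (\<lambda>_. gauss s)) (\<lambda>j \<omega>. restrict (\<lambda>i. \<omega> i) (K j)) L"
    by (rule P.indep_vars_restrict[OF coord_indep[OF s I] K dj])
  then show ?thesis
    by (rule P.indep_vars_compose2[where Y=f]) (rule f)
qed

lemma coord_distributed:
  assumes s: "s > 0" and k: "k \<in> I"
  shows "distributed (PiM I (\<lambda>_. gauss s)) lborel (\<lambda>y. y k) (normal_density 0 s)"
proof -
  have "distr (PiM I (\<lambda>_. gauss s)) lborel (\<lambda>y. y k) = distr (PiM I (\<lambda>_. gauss s)) (gauss s) (\<lambda>y. y k)"
    by (rule distr_cong) simp_all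
  also have "\<dots> = gauss s"
    using distr_PiM_component[of I "\<lambda>_. gauss s" k] gauss_prob[OF s] k by simp
  finally have "distr (PiM I (\<lambda>_. gauss s)) lborel (\<lambda>y. y k) = density lborel (normal_density 0 s)"
    by (simp add: gauss_def)
  moreover have "(\<lambda>y. y k) \<in> measurable (PiM I (\<lambda>_. gauss s)) lborel"
    using coord_meas[OF k, of s] by (simp only: measurable_lborel1)
  ultimately show ?thesis
    unfolding distributed_def by simp
qed

lemma gsum_half:
  fixes v :: "real^'d::finite"
  assumes s: "s > 0" and rowI: "\<And>l. WKey a i l \<in> I" and v: "v \<noteq> 0"
  shows "measure (PiM I (\<lambda>_. gauss s)) {y \<in> space (PiM I (\<lambda>_. gauss s)). wrow y a i \<bullet> v > 0} = 1/2"
proof -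
  let ?P = "PiM I (\<lambda>_. gauss s)"
  interpret P: prob_space ?P using s by (rule gauss_PiM_prob)
  define L where "L = {l. v $ l \<noteq> 0}"
  have Lne: "L \<noteq> {}" using v by (auto simp: L_def vec_eq_iff)
  have Lfin: "finite L" by simp
  define X where "X = (\<lambda>l (y::'d pkey \<Rightarrow> real). v $ l * y (WKey a i l))"
  have I: "I \<noteq> {}" using rowI by blast
  have ind0: "P.indep_vars (\<lambda>_. borel) (\<lambda>l \<omega>. (\<lambda>r. v $ l * r (WKey a i l)) (restrict \<omega> {WKey a i l})) L"
    by (rule indep_restrict_gauss[OF s I])
       (auto simp: disjoint_family_on_def rowI intro!: borel_measurable_times coord_meas)
  have ind: "P.indep_vars (\<lambda>_. borel) X L"
    using ind0 by (subst P.indep_vars_cong[where Y="\<lambda>l \<omega>. (\<lambda>r. v $ l * r (WKey a i l)) (restrict \<omega> {WKey a i l})" and J=L and N'="\<lambda>_. borel"]) (auto simp: X_def)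
  have dX: "distributed ?P lborel (X l) (normal_density 0 (\<bar>v $ l\<bar> * s))" if "l \<in> L" for l
  proof -
    have "distributed ?P lborel (\<lambda>x. 0 + v $ l * x (WKey a i l)) (normal_density (0 + v $ l * 0) (\<bar>v $ l\<bar> * s))"
      by (rule P.normal_density_affine[OF coord_distributed[OF s rowI] s]) (use that in \<open>simp add: L_def\<close>)
    then show ?thesis by (simp add: X_def)
  qed
  define S where "S = sqrt (\<Sum>l\<in>L. (\<bar>v $ l\<bar> * s)\<^sup>2)"
  have dS: "distributed ?P lborel (\<lambda>y. \<Sum>l\<in>L. X l y) (normal_density 0 S)"
    using P.sum_indep_normal[OF Lfin Lne ind, where \<sigma>="\<lambda>l. \<bar>v $ l\<bar> * s" and \<mu>="\<lambda>_. 0"] dX s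
    by (simp add: S_def L_def)
  have Spos: "S > 0" unfolding S_def using Lne s
    by (intro real_sqrt_gt_zero sum_pos) (auto simp: L_def)
  have eq: "wrow y a i \<bullet> v = (\<Sum>l\<in>L. X l y)" for y
  proof -
    have "wrow y a i \<bullet> v = (\<Sum>l\<in>UNIV. X l y)"
      by (simp add: inner_vec_def wrow_def X_def mult.commute)
    also have "\<dots> = (\<Sum>l\<in>L. X l y)"
      by (rule sum.mono_neutral_right) (auto simp: L_def X_def)
    finally show ?thesis .
  qed
  have "{y \<in> space ?P. wrow y a i \<bullet> v > 0} = (\<lambda>y. \<Sum>l\<in>L. X l y) -` {0<..} \<inter> space ?P"
    by (auto simp: eq)
  also have "measure ?P \<dots> = measure (distr ?P lborel (\<lambda>y. \<Sum>l\<in>L. X l y)) {0<..}"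
    using dS by (subst measure_distr) (auto simp: distributed_def)
  also have "\<dots> = measure (density lborel (normal_density 0 S)) {0<..}"
    using dS by (simp add: distributed_def)
  also have "\<dots> = 1/2" by (rule normal_half[OF Spos])
  finally show ?thesis .
qed

lemma wrow_inner: "wrow y a i \<bullet> v = (\<Sum>l\<in>UNIV. y (WKey a i l) * v $ l)"
  by (simp add: inner_vec_def wrow_def)

lemma card_as_sum: "real (card {i \<in> {..<m::nat}. P i}) = (\<Sum>i<m. if P i then 1 else 0::real)"
  using sum.inter_filter[of "{..<m}" "\<lambda>_. 1::real" P] by simp

lemma W_bound:
  fixes v :: "real^'d::finite"
  assumes s: "s > 0" and rows: "\<And>i l. i < m \<Longrightarrow> WKey a i l \<in> I" and v: "v \<noteq> 0"
  shows "measure (PiM I (\<lambda>_. gauss s))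
     {y \<in> space (PiM I (\<lambda>_. gauss s)). real (card {i \<in> {..<m}. wrow y a i \<bullet> v > 0}) < 0.4 * real m}
     \<le> exp (- real m / 50)"
proof (cases "m = 0")
  case True then show ?thesis by simp
next
  case False
  then have m: "m > 0" by simp
  let ?P = "PiM I (\<lambda>_. gauss s)"
  interpret P: prob_space ?P using s by (rule gauss_PiM_prob)
  define X where "X = (\<lambda>i (y::'d pkey \<Rightarrow> real). if wrow y a i \<bullet> v > 0 then 1 else (0::real))"
  define K where "K = (\<lambda>i. range (WKey a i))"
  define f where "f = (\<lambda>i (r::'d pkey \<Rightarrow> real). if (\<Sum>l\<in>UNIV. r (WKey a i l) * v $ l) > 0 then 1 else (0::real))"
  have I: "I \<noteq> {}" using rows m by blast
  have fm: "f i \<in> borel_measurable (PiM (K i) (\<lambda>_. gauss s))" for i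
    unfolding f_def K_def
    by measurable
  have ind0: "P.indep_vars (\<lambda>_. borel) (\<lambda>i \<omega>. f i (restrict \<omega> (K i))) {..<m}"
    by (rule indep_restrict_gauss[OF s I _ _ fm]) (auto simp: K_def disjoint_family_on_def rows)
  have ind: "P.indep_vars (\<lambda>_. borel) X {..<m}"
    using ind0 by (subst P.indep_vars_cong[where Y="\<lambda>i \<omega>. f i (restrict \<omega> (K i))" and J="{..<m}" and N'="\<lambda>_. borel"])
      (auto simp: X_def f_def K_def wrow_inner)
  have Xm: "X i \<in> borel_measurable ?P" if "i < m" for i
    using ind that unfolding P.indep_vars_def by auto
  have EX: "P.expectation (X i) = 1/2" if "i < m" for i
  proof -
    have "P.expectation (X i) = P.expectation (indicator {y \<in> space ?P. wrow y a i \<bullet> v > 0})"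
      by (rule Bochner_Integration.integral_cong) (auto simp: X_def indicator_def)
    also have "\<dots> = measure ?P {y \<in> space ?P. wrow y a i \<bullet> v > 0}"
      by (simp add: Int_absorb2 subset_iff)
    also have "\<dots> = 1/2" by (rule gsum_half[OF s _ v]) (use rows that in auto)
    finally show ?thesis .
  qed
  interpret H: Hoeffding_ineq ?P "{..<m}" X "\<lambda>_. 0" "\<lambda>_. 1" "real m / 2"
  proof unfold_locales
    show "finite {..<m}" by simp
    show "P.indep_vars (\<lambda>_. borel) X {..<m}" by (rule ind)
    show "AE x in ?P. X i x \<in> {0..1}" if "i \<in> {..<m}" for i by (auto simp: X_def)
    have "(\<Sum>i\<in>{..<m}. P.expectation (X i)) = (\<Sum>i\<in>{..<m}. 1/2)"
      by (rule sum.cong) (auto simp: EX)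
    then show "real m / 2 \<equiv> (\<Sum>i\<in>{..<m}. P.expectation (X i))"
      by (intro eq_reflection) simp
  qed
  have "P.prob {y \<in> space ?P. (\<Sum>i\<in>{..<m}. X i y) \<le> real m / 2 - real m / 10}
       \<le> exp (-2 * (real m / 10)\<^sup>2 / (\<Sum>i\<in>{..<m}. (1 - 0)\<^sup>2))"
    by (rule H.Hoeffding_ineq_le) (use m in auto)
  also have "\<dots> = exp (- real m / 50)" using m by (simp add: power2_eq_square)
  finally have hb: "P.prob {y \<in> space ?P. (\<Sum>i\<in>{..<m}. X i y) \<le> real m / 2 - real m / 10} \<le> exp (- real m / 50)" .
  have "measure ?P {y \<in> space ?P. real (card {i \<in> {..<m}. wrow y a i \<bullet> v > 0}) < 0.4 * real m}
      \<le> P.prob {y \<in> space ?P. (\<Sum>i\<in>{..<m}. X i y) \<le> real m / 2 - real m / 10}"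
  proof (rule P.finite_measure_mono)
    show "{y \<in> space ?P. real (card {i \<in> {..<m}. wrow y a i \<bullet> v > 0}) < 0.4 * real m}
      \<subseteq> {y \<in> space ?P. (\<Sum>i\<in>{..<m}. X i y) \<le> real m / 2 - real m / 10}"
      by (auto simp: card_as_sum[symmetric] X_def)
    show "{y \<in> space ?P. (\<Sum>i\<in>{..<m}. X i y) \<le> real m / 2 - real m / 10} \<in> sets ?P"
      using Xm by measurable
  qed
  with hb show ?thesis by linarith
qed

lemma bad_meas:
  fixes V :: "('d::finite pkey \<Rightarrow> real) \<Rightarrow> real^'d" and a :: 'd
  assumes meas: "\<And>i. i < m \<Longrightarrow> (\<lambda>\<omega>. wrow \<omega> a i \<bullet> V \<omega>) \<in> borel_measurable (init_space s m)"
  shows "{\<omega> \<in> space (init_space s m).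
           real (card {i \<in> {..<m}. wrow \<omega> a i \<bullet> V \<omega> > 0}) < 0.4 * real m} \<in> sets (init_space s m)"
proof -
  let ?P = "init_space s m"
  have fm: "(\<lambda>\<omega>. if 0 < wrow \<omega> a i \<bullet> V \<omega> then 1 else 0::real) \<in> borel_measurable ?P" if "i \<in> {..<m}" for i
  proof -
    have [measurable]: "(\<lambda>\<omega>. wrow \<omega> a i \<bullet> V \<omega>) \<in> borel_measurable ?P" using meas that by simp
    show ?thesis by measurable
  qed
  have "{\<omega> \<in> space ?P. real (card {i \<in> {..<m}. wrow \<omega> a i \<bullet> V \<omega> > 0}) < 0.4 * real m}
     = {\<omega> \<in> space ?P. (\<Sum>i<m. if 0 < wrow \<omega> a i \<bullet> V \<omega> then 1 else 0::real) < 0.4 * real m}"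
    by (simp only: card_as_sum)
  also have "\<dots> \<in> sets ?P"
    using borel_measurable_sum[OF fm] by measurable
  finally show ?thesis .
qed

lemma bad_bound:
  fixes V :: "('d::finite pkey \<Rightarrow> real) \<Rightarrow> real^'d" and a :: 'd
  assumes s: "s > 0"
    and dep: "\<And>\<omega> \<omega>'. (\<And>p q. \<omega> (ZKey p q) = \<omega>' (ZKey p q)) \<Longrightarrow> V \<omega> = V \<omega>'"
    and nz: "\<And>\<omega>. V \<omega> \<noteq> 0"
    and meas: "\<And>i. i < m \<Longrightarrow> (\<lambda>\<omega>. wrow \<omega> a i \<bullet> V \<omega>) \<in> borel_measurable (init_space s m)"
  shows "measure (init_space s m) {\<omega> \<in> space (init_space s m).
           real (card {i \<in> {..<m}. wrow \<omega> a i \<bullet> V \<omega> > 0}) < 0.4 * real m} \<le> exp (- real m / 50)"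
proof -
  let ?M = "\<lambda>_::'d pkey. gauss s"
  let ?P = "init_space s m"
  let ?Q = "PiM (KW m) ?M"
  let ?Z = "PiM KZ ?M"
  define A where "A = {\<omega> \<in> space ?P. real (card {i \<in> {..<m}. wrow \<omega> a i \<bullet> V \<omega> > 0}) < 0.4 * real m}"
  have Peq: "?P = PiM (KZ \<union> KW m) ?M" by (simp add: init_space_def init_keys_eq)
  interpret P: prob_space ?P unfolding init_space_def using s by (rule gauss_PiM_prob)
  interpret Z: prob_space ?Z using s by (rule gauss_PiM_prob)
  interpret PS: product_sigma_finite ?M
    using gauss_prob[OF s] by (simp add: product_sigma_finite_def prob_space_imp_sigma_finite)
  have "A \<in> sets ?P" unfolding A_def by (rule bad_meas[OF meas])
  then have Am: "A \<in> sets (PiM (KZ \<union> KW m) ?M)" by (simp add: Peq)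
  have dj: "KZ \<inter> KW m = {}" by (auto simp: KZ_def KW_def)
  have "emeasure ?P A = (\<integral>\<^sup>+x. emeasure ?Q ((\<lambda>y. merge KZ (KW m) (x, y)) -` A \<inter> space ?Q) \<partial>?Z)"
    unfolding Peq by (rule PS.emeasure_fold_integral[OF dj finite_KZ finite_KW Am])
  also have "\<dots> \<le> (\<integral>\<^sup>+x. ennreal (exp (- real m / 50)) \<partial>?Z)"
  proof (rule nn_integral_mono)
    fix x assume x: "x \<in> space ?Z"
    have sec: "(\<lambda>y. merge KZ (KW m) (x, y)) -` A \<inter> space ?Q =
      {y \<in> space ?Q. real (card {i \<in> {..<m}. wrow y a i \<bullet> V x > 0}) < 0.4 * real m}"
    proof -
      have Vx: "V (merge KZ (KW m) (x, y)) = V x" for y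
        by (rule dep) (simp add: merge_def KZ_def)
      have wr: "wrow (merge KZ (KW m) (x, y)) a i = wrow y a i" if "i < m" for y i
        using that by (simp add: wrow_def merge_def KZ_def KW_def)
      have sp: "merge KZ (KW m) (x, y) \<in> space ?P" if "y \<in> space ?Q" for y
        using x that dj by (auto simp: Peq space_PiM PiE_iff gauss_def)
      have cs: "{i. i < m \<and> 0 < wrow (merge KZ (KW m) (x, y)) a i \<bullet> V x} = {i. i < m \<and> 0 < wrow y a i \<bullet> V x}" for y
        using wr by auto
      show ?thesis
        unfolding A_def using sp by (auto simp: Vx cs)
    qed
    interpret Q: prob_space ?Q using s by (rule gauss_PiM_prob)
    have "measure ?Q {y \<in> space ?Q. real (card {i \<in> {..<m}. wrow y a i \<bullet> V x > 0}) < 0.4 * real m}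
          \<le> exp (- real m / 50)"
      by (rule W_bound[OF s _ nz]) (auto simp: KW_def)
    then show "emeasure ?Q ((\<lambda>y. merge KZ (KW m) (x, y)) -` A \<inter> space ?Q) \<le> ennreal (exp (- real m / 50))"
      unfolding sec by (simp add: Q.emeasure_eq_measure)
  qed
  also have "\<dots> = ennreal (exp (- real m / 50))"
    by (simp add: Z.emeasure_space_1)
  finally have "emeasure ?P A \<le> ennreal (exp (- real m / 50))" .
  then show ?thesis unfolding A_def[symmetric]
    by (simp add: P.emeasure_eq_measure)
qed

lemma attn3:
  fixes x1 x2 x3 :: "real^'d::finite"
  shows "attn_out Z [x1, x2, x3] =
    (exp (x1 \<bullet> (Z *v x3) / sqrt (real CARD('d))) / (exp (x1 \<bullet> (Z *v x3) / sqrt (real CARD('d))) + exp (x2 \<bullet> (Z *v x3) / sqrt (real CARD('d))) + exp (x3 \<bullet> (Z *v x3) / sqrt (real CARD('d))))) *\<^sub>R x1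
  + (exp (x2 \<bullet> (Z *v x3) / sqrt (real CARD('d))) / (exp (x1 \<bullet> (Z *v x3) / sqrt (real CARD('d))) + exp (x2 \<bullet> (Z *v x3) / sqrt (real CARD('d))) + exp (x3 \<bullet> (Z *v x3) / sqrt (real CARD('d))))) *\<^sub>R x2
  + (exp (x3 \<bullet> (Z *v x3) / sqrt (real CARD('d))) / (exp (x1 \<bullet> (Z *v x3) / sqrt (real CARD('d))) + exp (x2 \<bullet> (Z *v x3) / sqrt (real CARD('d))) + exp (x3 \<bullet> (Z *v x3) / sqrt (real CARD('d))))) *\<^sub>R x3
  + x3"
  by (simp add: attn_out_def softmax_def Let_def add.assoc)

lemma attn3_nz:
  fixes x1 x2 x3 :: "real^'d::finite"
  assumes "x1 \<bullet> x3 = 0" "x2 \<bullet> x3 = 0" "x3 \<noteq> 0"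
  shows "attn_out Z [x1, x2, x3] \<noteq> 0"
proof -
  define e1 where "e1 = exp (x1 \<bullet> (Z *v x3) / sqrt (real CARD('d)))"
  define e2 where "e2 = exp (x2 \<bullet> (Z *v x3) / sqrt (real CARD('d)))"
  define e3 where "e3 = exp (x3 \<bullet> (Z *v x3) / sqrt (real CARD('d)))"
  have pos: "e1 > 0" "e2 > 0" "e3 > 0" by (simp_all add: e1_def e2_def e3_def)
  have "attn_out Z [x1, x2, x3] \<bullet> x3 = (e3 / (e1 + e2 + e3) + 1) * (x3 \<bullet> x3)"
    unfolding attn3 e1_def[symmetric] e2_def[symmetric] e3_def[symmetric]
    using assms by (simp add: inner_add_left algebra_simps)
  moreover have "(e3 / (e1 + e2 + e3) + 1) * (x3 \<bullet> x3) > 0"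
    using pos assms by (intro mult_pos_pos add_pos_pos divide_pos_pos) auto
  ultimately show ?thesis by auto
qed

lemma final_arith:
  fixes N K c m \<delta> :: real
  assumes N: "N \<ge> 1" and K: "K > 0" and d: "\<delta> > 0" and c: "c \<le> N * K" and c0: "c \<ge> 0"
    and m: "m \<ge> 50 * ln (2 * (N + N * K) / \<delta>)"
  shows "2 * exp (- m / 50) * c \<le> \<delta>"
proof -
  define T where "T = 2 * (N + N * K)"
  have T: "T > 0" using N K by (simp add: T_def add_pos_pos)
  have "- m / 50 \<le> ln (\<delta> / T)"
    using m T d by (simp add: T_def ln_div)
  then have "exp (- m / 50) \<le> exp (ln (\<delta> / T))" by simp
  also have "\<dots> = \<delta> / T" using T d by simp
  finally have e: "exp (- m / 50) \<le> \<delta> / T" .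
  have "2 * exp (- m / 50) * c \<le> 2 * (\<delta> / T) * (N * K)"
    using e c c0 T d by (intro mult_mono) auto
  also have "\<dots> = \<delta> * (2 * N * K / T)" by simp
  also have "\<dots> \<le> \<delta> * 1"
    using T N K d by (intro mult_left_mono) (auto simp: T_def)
  finally show ?thesis by simp
qed

lemma meas_w:
  fixes c :: "real^'d::finite"
  assumes "i < m"
  shows "(\<lambda>\<omega>. wrow \<omega> a i \<bullet> c) \<in> borel_measurable (init_space s m)"
proof -
  have [measurable]: "(\<lambda>\<omega>. \<omega> (WKey a i l)) \<in> borel_measurable (init_space s m)" for l
    unfolding init_space_def by (rule coord_meas) (use assms in \<open>auto simp: init_keys_def\<close>)
  show ?thesis unfolding wrow_inner by measurable
qed

lemma Zmat_inner: "x \<bullet> (Zmat \<omega> *v y) = (\<Sum>p\<in>UNIV. x $ p * (\<Sum>q\<in>UNIV. \<omega> (ZKey p q) * y $ q))"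
  by (simp add: inner_vec_def matrix_vector_mult_def Zmat_def)

lemma meas_z:
  fixes x y :: "real^'d::finite"
  shows "(\<lambda>\<omega>. x \<bullet> (Zmat \<omega> *v y)) \<in> borel_measurable (init_space s m)"
proof -
  have [measurable]: "(\<lambda>\<omega>. \<omega> (ZKey p q)) \<in> borel_measurable (init_space s m)" for p q
    unfolding init_space_def by (rule coord_meas) (auto simp: init_keys_def)
  show ?thesis unfolding Zmat_inner by measurable
qed

lemma meas_attn:
  fixes x1 x2 x3 :: "real^'d::finite"
  assumes "i < m"
  shows "(\<lambda>\<omega>. wrow \<omega> a i \<bullet> attn_out (Zmat \<omega>) [x1, x2, x3]) \<in> borel_measurable (init_space s m)"
proof -
  note [measurable] = meas_w[OF assms, of a x1 s] meas_w[OF assms, of a x2 s] meas_w[OF assms, of a x3 s]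
    meas_z[of x1 x3 s m] meas_z[of x2 x3 s m] meas_z[of x3 x3 s m]
  show ?thesis unfolding attn3 inner_add_right inner_scaleR_right by measurable
qed

theorem lemma6:
  fixes tv :: "'r tok \<Rightarrow> real^'d::finite"
    and I :: "'r tok \<Rightarrow> 'd"
    and N K m :: nat
    and R :: "'r set"
    and B :: "nat \<Rightarrow> 'r set"
    and \<sigma>0 \<delta> :: real
  assumes nonzero: "\<And>t. t \<in> tokens N R \<Longrightarrow> tv t \<noteq> 0"
    and orth: "\<And>t t'. t \<in> tokens N R \<Longrightarrow> t' \<in> tokens N R \<Longrightarrow> t \<noteq> t' \<Longrightarrow> tv t \<bullet> tv t' = 0"
    and finR: "finite R"
    and Kpos: "K > 0"
    and B_sub: "\<And>j. j \<in> {1..N} \<Longrightarrow> B j \<subseteq> R"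
    and B_card: "\<And>j. j \<in> {1..N} \<Longrightarrow> card (B j) \<le> K"
    and sigma_pos: "\<sigma>0 > 0"
    and delta_pos: "\<delta> > 0"
    and m_large: "real m \<ge> 50 * ln (2 * (real N + real N * real K) / \<delta>)"
  shows "measure (init_space \<sigma>0 m)
           {\<omega> \<in> space (init_space \<sigma>0 m).
              \<forall>j\<in>{1..N}. \<forall>k\<in>B j.
                 real (card {i \<in> {..<m}. wrow \<omega> (I (TR k)) i \<bullet> tv (TS j) > 0}) \<ge> 0.4 * real m
               \<and> real (card {i \<in> {..<m}. wrow \<omega> (I (TA j)) i \<bullet>
                    attn_out (Zmat \<omega>) [tv TO, tv (TS j), tv (TR k)] > 0}) \<ge> 0.4 * real m}
         \<ge> 1 - \<delta>"
proof -
  let ?P = "init_space \<sigma>0 m"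
  interpret P: prob_space ?P unfolding init_space_def using sigma_pos by (rule gauss_PiM_prob)
  define e where "e = exp (- real m / 50)"
  define PI where "PI = Sigma {1..N} B"
  have finB: "finite (B j)" if "j \<in> {1..N}" for j using B_sub[OF that] finR by (rule finite_subset)
  have finPI: "finite PI" unfolding PI_def using finB by (intro finite_SigmaI) auto
  define A1 where "A1 = (\<lambda>(j,k). {\<omega> \<in> space ?P. real (card {i \<in> {..<m}. wrow \<omega> (I (TR k)) i \<bullet> tv (TS j) > 0}) < 0.4 * real m})"
  define A2 where "A2 = (\<lambda>(j,k). {\<omega> \<in> space ?P. real (card {i \<in> {..<m}. wrow \<omega> (I (TA j)) i \<bullet>
                    attn_out (Zmat \<omega>) [tv TO, tv (TS j), tv (TR k)] > 0}) < 0.4 * real m})"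
  have tok: "TO \<in> tokens N R" "TS j \<in> tokens N R" "TR k \<in> tokens N R" if "(j, k) \<in> PI" for j k
  proof -
    have j: "j \<in> {1..N}" and k: "k \<in> R" using that B_sub by (auto simp: PI_def)
    show "TO \<in> tokens N R" by (simp add: tokens_def)
    show "TS j \<in> tokens N R" using j unfolding tokens_def by blast
    show "TR k \<in> tokens N R" using k unfolding tokens_def by blast
  qed
  have A1m: "A1 p \<in> sets ?P" and A1b: "measure ?P (A1 p) \<le> e" if "p \<in> PI" for p
  proof -
    obtain j k where p: "p = (j, k)" by (cases p)
    have meas: "\<And>i. i < m \<Longrightarrow> (\<lambda>\<omega>. wrow \<omega> (I (TR k)) i \<bullet> (\<lambda>_. tv (TS j)) \<omega>) \<in> borel_measurable ?P"
      by (simp add: meas_w)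
    show "A1 p \<in> sets ?P"
      unfolding A1_def p prod.case by (rule bad_meas[OF meas])
    have jk: "(j, k) \<in> PI" using that p by simp
    have nz: "(\<lambda>_. tv (TS j)) \<omega> \<noteq> 0" for \<omega> :: "'d pkey \<Rightarrow> real"
      using nonzero[OF tok(2)[OF jk]] by simp
    have "measure ?P {\<omega> \<in> space ?P. real (card {i \<in> {..<m}. wrow \<omega> (I (TR k)) i \<bullet> (\<lambda>_. tv (TS j)) \<omega> > 0}) < 0.4 * real m}
          \<le> exp (- real m / 50)"
      by (rule bad_bound[OF sigma_pos _ nz meas]) (rule refl)
    then show "measure ?P (A1 p) \<le> e" unfolding A1_def p prod.case e_def .
  qed
  have A2m: "A2 p \<in> sets ?P" and A2b: "measure ?P (A2 p) \<le> e" if "p \<in> PI" for p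
  proof -
    obtain j k where p: "p = (j, k)" by (cases p)
    have meas: "\<And>i. i < m \<Longrightarrow> (\<lambda>\<omega>. wrow \<omega> (I (TA j)) i \<bullet> (\<lambda>\<omega>. attn_out (Zmat \<omega>) [tv TO, tv (TS j), tv (TR k)]) \<omega>) \<in> borel_measurable ?P"
      by (simp add: meas_attn)
    show "A2 p \<in> sets ?P"
      unfolding A2_def p prod.case by (rule bad_meas[OF meas])
    have jk: "(j, k) \<in> PI" using that p by simp
    have nz: "attn_out Z [tv TO, tv (TS j), tv (TR k)] \<noteq> 0" for Z
      by (rule attn3_nz) (use orth[OF tok(1)[OF jk] tok(3)[OF jk]] orth[OF tok(2)[OF jk] tok(3)[OF jk]] nonzero[OF tok(3)[OF jk]] in auto)
    have dep: "attn_out (Zmat \<omega>) [tv TO, tv (TS j), tv (TR k)] = attn_out (Zmat \<omega>') [tv TO, tv (TS j), tv (TR k)]"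
      if "\<And>p q. \<omega> (ZKey p q) = \<omega>' (ZKey p q)" for \<omega> \<omega>' :: "'d pkey \<Rightarrow> real"
    proof -
      have "Zmat \<omega> = Zmat \<omega>'" using that by (simp add: Zmat_def)
      then show ?thesis by simp
    qed
    have "measure ?P {\<omega> \<in> space ?P. real (card {i \<in> {..<m}. wrow \<omega> (I (TA j)) i \<bullet> (\<lambda>\<omega>. attn_out (Zmat \<omega>) [tv TO, tv (TS j), tv (TR k)]) \<omega> > 0}) < 0.4 * real m}
          \<le> exp (- real m / 50)"
      by (rule bad_bound[OF sigma_pos _ _ meas]) (rule dep, assumption, rule nz)
    then show "measure ?P (A2 p) \<le> e" unfolding A2_def p prod.case e_def .
  qed
  define U where "U = (\<Union>p\<in>PI. A1 p \<union> A2 p)"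
  have Um: "U \<in> sets ?P" unfolding U_def using finPI A1m A2m by blast
  have seteq: "{\<omega> \<in> space ?P. \<forall>j\<in>{1..N}. \<forall>k\<in>B j.
                 real (card {i \<in> {..<m}. wrow \<omega> (I (TR k)) i \<bullet> tv (TS j) > 0}) \<ge> 0.4 * real m
               \<and> real (card {i \<in> {..<m}. wrow \<omega> (I (TA j)) i \<bullet>
                    attn_out (Zmat \<omega>) [tv TO, tv (TS j), tv (TR k)] > 0}) \<ge> 0.4 * real m} = space ?P - U"
  proof (rule set_eqI)
    fix \<omega>
    have 1: "\<omega> \<in> space ?P - U \<longleftrightarrow> \<omega> \<in> space ?P \<and> (\<forall>j\<in>{1..N}. \<forall>k\<in>B j. \<omega> \<notin> A1 (j,k) \<and> \<omega> \<notin> A2 (j,k))"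
      unfolding U_def PI_def by blast
    have 2: "\<omega> \<notin> A1 (j,k) \<longleftrightarrow> real (card {i \<in> {..<m}. wrow \<omega> (I (TR k)) i \<bullet> tv (TS j) > 0}) \<ge> 0.4 * real m"
      if "\<omega> \<in> space ?P" for j k
      using that unfolding A1_def prod.case mem_Collect_eq not_less[symmetric] by blast
    have 3: "\<omega> \<notin> A2 (j,k) \<longleftrightarrow> real (card {i \<in> {..<m}. wrow \<omega> (I (TA j)) i \<bullet>
                    attn_out (Zmat \<omega>) [tv TO, tv (TS j), tv (TR k)] > 0}) \<ge> 0.4 * real m"
      if "\<omega> \<in> space ?P" for j k
      using that unfolding A2_def prod.case mem_Collect_eq not_less[symmetric] by blast
    show "\<omega> \<in> {\<omega> \<in> space ?P. \<forall>j\<in>{1..N}. \<forall>k\<in>B j.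
                 real (card {i \<in> {..<m}. wrow \<omega> (I (TR k)) i \<bullet> tv (TS j) > 0}) \<ge> 0.4 * real m
               \<and> real (card {i \<in> {..<m}. wrow \<omega> (I (TA j)) i \<bullet>
                    attn_out (Zmat \<omega>) [tv TO, tv (TS j), tv (TR k)] > 0}) \<ge> 0.4 * real m} \<longleftrightarrow> \<omega> \<in> space ?P - U"
      unfolding 1 mem_Collect_eq using 2 3 by blast
  qed
  have "measure ?P U \<le> (\<Sum>p\<in>PI. measure ?P (A1 p \<union> A2 p))"
    unfolding U_def using finPI A1m A2m by (intro measure_UNION_le) auto
  also have "\<dots> \<le> (\<Sum>p\<in>PI. 2 * e)"
  proof (rule sum_mono)
    fix p assume p: "p \<in> PI"
    have "measure ?P (A1 p \<union> A2 p) \<le> measure ?P (A1 p) + measure ?P (A2 p)"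
      by (rule measure_Un_le[OF A1m[OF p] A2m[OF p]])
    then show "measure ?P (A1 p \<union> A2 p) \<le> 2 * e" using A1b[OF p] A2b[OF p] by simp
  qed
  also have "\<dots> = 2 * e * real (card PI)" by simp
  finally have Ub: "measure ?P U \<le> 2 * e * real (card PI)" .
  have cardPI: "real (card PI) \<le> real N * real K"
  proof -
    have "card PI = (\<Sum>j\<in>{1..N}. card (B j))"
      unfolding PI_def using finB by (intro card_SigmaI) auto
    also have "\<dots> \<le> card {1..N} * K"
      using sum_bounded_above[of "{1..N}" "\<lambda>j. card (B j)" K] B_card by simp
    finally show ?thesis by (metis card_atLeastAtMost diff_Suc_1 of_nat_le_iff of_nat_mult)
  qed
  have bound: "2 * e * real (card PI) \<le> \<delta>"
  proof (cases "N = 0")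
    case True
    then have "PI = {}" by (simp add: PI_def)
    then show ?thesis using delta_pos by simp
  next
    case False
    show ?thesis unfolding e_def
      by (rule final_arith[where N="real N" and K="real K"]) (use False Kpos delta_pos cardPI m_large in auto)
  qed
  have "measure ?P (space ?P - U) = 1 - measure ?P U" by (rule P.prob_compl[OF Um])
  then show ?thesis unfolding seteq using Ub bound by linarith
qed

end
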